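(* Let $P^A,P^B,S$ be pairwise disjoint infinite sets of positive integers, each with a fixed enumeration, and for real $x\ge0$ let $P^c_x$ (resp. $S_x$) denote the first $\lfloor x\rfloor$ elements of $P^c$ (resp. $S$). For $c\in\{A,B\}$ and integers $0<k\le t$ define $F^c_{t,k}=P^c_{t/2+1}\cup(S_{t/2}\setminus S_{t-k})$. Then $\{F^c_{t,k}\}$ is an F-system, and for every positive integer $t$, $\left|\bigcup_{c\in\{A,B\}}\bigcup_{0<\kappa\le\tau\le t}F^c_{\tau,\kappa}\right|\le 1.5\,t+2$; in particular it is a $1.5$-competitive F-system.
   Context: F-system: a family $\mathcal F=\{F^c_{t,k}\}$ of sets of positive integers, indexed by $c\in\{A,B\}$ and integers $0<k\le t$, such that (F1) $|F^c_{t,k}|\ge k$ for all $c,t,k$; and (F2) $F^A_{t,k}\cap F^B_{t',k'}=\emptyset$ for all $k\le t$, $k'\le t'$ with $k+k'\le\max(t,t')$. An F-system is $R$-competitive if there is a constant $\lambda$ (independent of $t$) such that for every positive integer $t$, $\left|\bigcup_{c\in\{A,B\}}\bigcup_{0<\kappa\le\tau\le t}F^c_{\tau,\kappa}\right|\le Rt+\lambda$. *)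

theory Defs
  imports Complex_Main
begin

datatype color = A | B

text \<open>A family F c t k of sets of positive integers (only indices 0 < k <= t matter).\<close>
definition F_system :: "(color \<Rightarrow> nat \<Rightarrow> nat \<Rightarrow> nat set) \<Rightarrow> bool" where
  "F_system F \<longleftrightarrow>
     (\<forall>c t k. 0 < k \<and> k \<le> t \<longrightarrow> (\<forall>x\<in>F c t k. 0 < x)) \<and>
     (\<forall>c t k. 0 < k \<and> k \<le> t \<longrightarrow> (infinite (F c t k) \<or> k \<le> card (F c t k))) \<and>
     (\<forall>t k t' k'. 0 < k \<and> k \<le> t \<and> 0 < k' \<and> k' \<le> t' \<and> k + k' \<le> max t t'
        \<longrightarrow> F A t k \<inter> F B t' k' = {})"

definition F_union :: "(color \<Rightarrow> nat \<Rightarrow> nat \<Rightarrow> nat set) \<Rightarrow> nat \<Rightarrow> nat set" where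
  "F_union F t = (\<Union>c\<in>UNIV. \<Union>\<tau>\<in>{1..t}. \<Union>\<kappa>\<in>{1..\<tau>}. F c \<tau> \<kappa>)"

definition competitive :: "real \<Rightarrow> (color \<Rightarrow> nat \<Rightarrow> nat \<Rightarrow> nat set) \<Rightarrow> bool" where
  "competitive R F \<longleftrightarrow> F_system F \<and>
     (\<exists>lam::real. \<forall>t::nat. 0 < t \<longrightarrow>
        finite (F_union F t) \<and> real (card (F_union F t)) \<le> R * real t + lam)"

definition first_elems :: "(nat \<Rightarrow> nat) \<Rightarrow> real \<Rightarrow> nat set" where
  "first_elems e x = e ` {..<nat \<lfloor>x\<rfloor>}"

definition Fcons :: "(color \<Rightarrow> nat \<Rightarrow> nat) \<Rightarrow> (nat \<Rightarrow> nat) \<Rightarrow> color \<Rightarrow> nat \<Rightarrow> nat \<Rightarrow> nat set" where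
  "Fcons P S c t k = first_elems (P c) (real t / 2 + 1) \<union>
      (first_elems S (real t / 2) - first_elems S (real t - real k))"

end

theory Submission
  imports Defs
begin

lemma fl1: "nat \<lfloor>real t / 2 + 1\<rfloor> = t div 2 + 1"
proof -
  have "\<lfloor>real t / 2 + 1\<rfloor> = \<lfloor>real t / real (2::nat)\<rfloor> + 1" by simp
  also have "\<lfloor>real t / real (2::nat)\<rfloor> = int (t div 2)" by (rule floor_divide_of_nat_eq)
  finally show ?thesis by simp
qed

lemma fl2: "nat \<lfloor>real t / 2\<rfloor> = t div 2"
proof -
  have "\<lfloor>real t / real (2::nat)\<rfloor> = int (t div 2)" by (rule floor_divide_of_nat_eq)
  thus ?thesis by simp
qed

lemma fl3: "k \<le> t \<Longrightarrow> nat \<lfloor>real t - real k\<rfloor> = t - k"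
proof -
  assume "k \<le> t"
  hence "real t - real k = real (t - k)" by (simp add: of_nat_diff)
  thus ?thesis by (simp only: floor_of_nat nat_int)
qed

lemma Fcons_eq:
  assumes "inj S" "k \<le> t"
  shows "Fcons P S c t k = P c ` {..<t div 2 + 1} \<union> S ` {t - k..<t div 2}"
proof -
  have "S ` {..<t div 2} - S ` {..<t-k} = S ` ({..<t div 2} - {..<t-k})"
    using assms(1) by (rule image_set_diff[symmetric])
  also have "{..<t div 2} - {..<t-k} = {t - k..<t div 2}" by auto
  finally have e: "S ` {..<t div 2} - S ` {..<t-k} = S ` {t - k..<t div 2}" .
  show ?thesis
    unfolding Fcons_def first_elems_def fl1 fl2 fl3[OF assms(2)] e ..
qed

lemma arA: "\<lbrakk>t - k \<le> (x::nat); x < t div 2; t' - k' \<le> x; x < t' div 2; k \<le> t; k' \<le> t'; k + k' \<le> max t t'\<rbrakk> \<Longrightarrow> False"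
  by (simp add: max_def split: if_splits; presburger)
lemma arB: "k \<le> (t::nat) \<Longrightarrow> c = t div 2 + 1 + (t div 2 - (t - k)) \<Longrightarrow> k \<le> c" by presburger

theorem mainTheorem3:
  fixes P :: "color \<Rightarrow> nat \<Rightarrow> nat" and S :: "nat \<Rightarrow> nat"
  assumes "\<And>c. inj (P c)" and "inj S"
    and "\<And>c n. 0 < P c n" and "\<And>n. 0 < S n"
    and "range (P A) \<inter> range (P B) = {}"
    and "\<And>c. range (P c) \<inter> range S = {}"
  shows "F_system (Fcons P S)
    \<and> (\<forall>t::nat. 0 < t \<longrightarrow> real (card (F_union (Fcons P S) t)) \<le> 1.5 * real t + 2)
    \<and> competitive 1.5 (Fcons P S)"
proof -
  note FE = Fcons_eq[OF assms(2)]
  have pos: "\<forall>x\<in>Fcons P S c t k. 0 < x" if "k \<le> t" for c t k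
    using FE[OF that] assms(3,4) by auto
  have crd: "k \<le> card (Fcons P S c t k)" if "k \<le> t" for c t k
  proof -
    have d: "P c ` {..<t div 2 + 1} \<inter> S ` {t - k..<t div 2} = {}" using assms(6)[of c] by auto
    have "card (Fcons P S c t k) = card (P c ` {..<t div 2 + 1}) + card (S ` {t - k..<t div 2})"
      unfolding FE[OF that] by (rule card_Un_disjoint) (use d in auto)
    also have "\<dots> = (t div 2 + 1) + (t div 2 - (t - k))"
      using card_image[OF inj_on_subset[OF assms(1)[of c]]] card_image[OF inj_on_subset[OF assms(2)]]
      by simp
    finally show ?thesis using that arB by blast
  qed
  have disj: "Fcons P S A t k \<inter> Fcons P S B t' k' = {}"
    if "0 < k" "k \<le> t" "0 < k'" "k' \<le> t'" "k + k' \<le> max t t'" for t k t' k'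
  proof -
    have "S ` {t - k..<t div 2} \<inter> S ` {t' - k'..<t' div 2} = {}"
    proof -
      have "{t - k..<t div 2} \<inter> {t' - k'..<t' div 2} = {}"
      proof (rule ccontr)
        assume "\<not> ?thesis"
        then obtain x where "x \<in> {t - k..<t div 2} \<inter> {t' - k'..<t' div 2}" by blast
        hence "t - k \<le> x" "x < t div 2" "t' - k' \<le> x" "x < t' div 2" by auto
        thus False using that(2,4,5) arA by blast
      qed
      thus ?thesis by (simp only: image_Int[OF assms(2), symmetric] image_empty)
    qed
    moreover have "P A ` X \<inter> P B ` Y = {}" for X Y using assms(5) by (auto simp: disjoint_iff)
    moreover have "P c ` X \<inter> S ` Y = {}" for c X Y using assms(6)[of c] by (auto simp: disjoint_iff)
    moreover have "S ` Y \<inter> P c ` X = {}" for c X Y using assms(6)[of c] by (auto simp: disjoint_iff)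
    ultimately show ?thesis unfolding FE[OF that(2)] FE[OF that(4)] Int_Un_distrib Int_Un_distrib2
      by simp
  qed
  have FS: "F_system (Fcons P S)"
    unfolding F_system_def
  proof (intro conjI allI impI)
    fix c :: color and t k :: nat assume "0 < k \<and> k \<le> t" thus "\<forall>x\<in>Fcons P S c t k. 0 < x" using pos by blast
  next
    fix c :: color and t k :: nat assume "0 < k \<and> k \<le> t" thus "infinite (Fcons P S c t k) \<or> k \<le> card (Fcons P S c t k)" using crd by blast
  next
    fix t k t' k' :: nat assume "0 < k \<and> k \<le> t \<and> 0 < k' \<and> k' \<le> t' \<and> k + k' \<le> max t t'"
    thus "Fcons P S A t k \<inter> Fcons P S B t' k' = {}" using disj by blast
  qed
  have sub: "F_union (Fcons P S) t \<subseteq>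
      P A ` {..<t div 2 + 1} \<union> P B ` {..<t div 2 + 1} \<union> S ` {..<t div 2}" for t
  proof
    fix x assume "x \<in> F_union (Fcons P S) t"
    then obtain c \<tau> \<kappa> where h: "\<tau> \<in> {1..t}" "\<kappa> \<in> {1..\<tau>}" "x \<in> Fcons P S c \<tau> \<kappa>"
      unfolding F_union_def by blast
    have m: "\<tau> div 2 \<le> t div 2" using h(1) by (simp add: div_le_mono)
    from h(3) FE[of \<kappa> \<tau> P c] h(2) have "x \<in> P c ` {..<\<tau> div 2 + 1} \<union> S ` {\<tau> - \<kappa>..<\<tau> div 2}" by simp
    thus "x \<in> P A ` {..<t div 2 + 1} \<union> P B ` {..<t div 2 + 1} \<union> S ` {..<t div 2}"
      using m by (cases c) auto
  qed
  have bnd: "finite (F_union (Fcons P S) t) \<and> real (card (F_union (Fcons P S) t)) \<le> 1.5 * real t + 2" for t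
  proof -
    let ?U = "P A ` {..<t div 2 + 1} \<union> P B ` {..<t div 2 + 1} \<union> S ` {..<t div 2}"
    have fin: "finite ?U" by simp
    have "card (F_union (Fcons P S) t) \<le> card ?U" by (rule card_mono[OF fin sub])
    also have "card ?U \<le> card (P A ` {..<t div 2 + 1}) + card (P B ` {..<t div 2 + 1}) + card (S ` {..<t div 2})"
      by (meson add_le_mono card_Un_le le_trans order_refl)
    also have "\<dots> \<le> (t div 2 + 1) + (t div 2 + 1) + t div 2"
      by (intro add_le_mono; metis card_image_le card_lessThan finite_lessThan)
    finally have c: "card (F_union (Fcons P S) t) \<le> 3 * (t div 2) + 2" by simp
    have "3 * (t div 2) * 2 \<le> 3 * t" by simp
    hence "real (3 * (t div 2)) \<le> 1.5 * real t"
    proof -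
      have "real (3 * (t div 2) * 2) \<le> real (3 * t)" using \<open>3 * (t div 2) * 2 \<le> 3 * t\<close> by (simp only: of_nat_le_iff)
      thus ?thesis by simp
    qed
    with c have "real (card (F_union (Fcons P S) t)) \<le> 1.5 * real t + 2"
    proof -
      have "real (card (F_union (Fcons P S) t)) \<le> real (3 * (t div 2) + 2)" using c by (simp only: of_nat_le_iff)
      thus ?thesis using \<open>real (3 * (t div 2)) \<le> 1.5 * real t\<close> by simp
    qed
    thus ?thesis using finite_subset[OF sub fin] by blast
  qed
  have C: "competitive 1.5 (Fcons P S)"
    unfolding competitive_def
  proof (rule conjI[OF FS], rule exI[of _ 2], intro allI impI)
    fix t :: nat assume "0 < t"
    show "finite (F_union (Fcons P S) t) \<and> real (card (F_union (Fcons P S) t)) \<le> 1.5 * real t + 2"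
      by (rule bnd)
  qed
  have D: "\<forall>t::nat. 0 < t \<longrightarrow> real (card (F_union (Fcons P S) t)) \<le> 1.5 * real t + 2"
    using bnd by simp
  show ?thesis by (intro conjI FS C D)
qed

end
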